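(* In the standing setup, assume in addition $2f\le n$. Let $T$ be a valid partial table. Then there exist a valid partial table $T'$ whose row sets $S'_i$ satisfy $|S'_i|=|S_i|$ for every $i\in\{1,\dots,f\}$, and pairwise distinct columns $b_1,\dots,b_f\in\{1,\dots,n\}$, such that for every $i$ for which $S'_i$ is not a basis of $M$ we have $T'(i,b_i)=\emptyset$.
   Context: Standing setup: $M$ is a matroid of rank $n$ on ground set $E$; $f\le n$ is a positive integer; for each $i\in\{1,\dots,f\}$ and $j\in\{1,\dots,n\}$, $B_{i,j}$ is a basis of $M$, and the sets $B_{i,j}$ are pairwise disjoint. A valid partial table $T$ assigns to each position $(i,j)\in[f]\times[n]$ either the symbol $\emptyset$ (the position is empty) or an element $T(i,j)\in B_{i,j}$, such that for every row $i$ the set $S_i=\{T(i,j):T(i,j)\ne\emptyset\}$ is independent and for every column $j$ the set $C_j=\{T(i,j):T(i,j)\neq\emptyset\}$ is independent. *)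

theory Defs
  imports Main
begin

definition matroid :: "'a set \<Rightarrow> ('a set \<Rightarrow> bool) \<Rightarrow> bool" where
  "matroid E indep \<longleftrightarrow>
     finite E \<and>
     (\<forall>X. indep X \<longrightarrow> X \<subseteq> E) \<and>
     indep {} \<and>
     (\<forall>X Y. indep X \<and> Y \<subseteq> X \<longrightarrow> indep Y) \<and>
     (\<forall>X Y. indep X \<and> indep Y \<and> card X < card Y \<longrightarrow>
        (\<exists>y \<in> Y - X. indep (insert y X)))"

definition basis :: "'a set \<Rightarrow> ('a set \<Rightarrow> bool) \<Rightarrow> 'a set \<Rightarrow> bool" where
  "basis E indep B \<longleftrightarrow> indep B \<and> (\<forall>x \<in> E - B. \<not> indep (insert x B))"

definition mrank :: "'a set \<Rightarrow> ('a set \<Rightarrow> bool) \<Rightarrow> nat" where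
  "mrank E indep = Max (card ` {X. indep X})"

text \<open>A partial table is a function from positions (i,j) to entries;
  None is the empty symbol. Row set S_i and column set C_j.\<close>
definition row_set :: "(nat \<Rightarrow> nat \<Rightarrow> 'a option) \<Rightarrow> nat \<Rightarrow> nat \<Rightarrow> 'a set" where
  "row_set T n i = {x. \<exists>j \<in> {1..n}. T i j = Some x}"

definition col_set :: "(nat \<Rightarrow> nat \<Rightarrow> 'a option) \<Rightarrow> nat \<Rightarrow> nat \<Rightarrow> 'a set" where
  "col_set T f j = {x. \<exists>i \<in> {1..f}. T i j = Some x}"

definition valid_table ::
  "('a set \<Rightarrow> bool) \<Rightarrow> nat \<Rightarrow> nat \<Rightarrow> (nat \<Rightarrow> nat \<Rightarrow> 'a set) \<Rightarrow> (nat \<Rightarrow> nat \<Rightarrow> 'a option) \<Rightarrow> bool" where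
  "valid_table indep f n B T \<longleftrightarrow>
     (\<forall>i \<in> {1..f}. \<forall>j \<in> {1..n}. \<forall>x. T i j = Some x \<longrightarrow> x \<in> B i j) \<and>
     (\<forall>i \<in> {1..f}. indep (row_set T n i)) \<and>
     (\<forall>j \<in> {1..n}. indep (col_set T f j))"

end

theory Submission imports Defs begin

lemma m_props: assumes "matroid E indep"
  shows "finite E" "\<And>X. indep X \<Longrightarrow> X \<subseteq> E" "indep {}" "\<And>X Y. indep X \<Longrightarrow> Y \<subseteq> X \<Longrightarrow> indep Y"
   "\<And>X Y. indep X \<Longrightarrow> indep Y \<Longrightarrow> card X < card Y \<Longrightarrow> \<exists>y\<in>Y-X. indep (insert y X)"
  using assms unfolding matroid_def by (elim conjE; metis)+

lemma m_sub: "matroid E indep \<Longrightarrow> indep X \<Longrightarrow> X \<subseteq> E"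
  by (rule m_props(2))
lemma m_fin: "matroid E indep \<Longrightarrow> indep X \<Longrightarrow> finite X"
  using m_props(1) m_sub rev_finite_subset by metis
lemma m_her: "matroid E indep \<Longrightarrow> indep X \<Longrightarrow> Y \<subseteq> X \<Longrightarrow> indep Y"
  by (rule m_props(4))
lemma m_aug: "matroid E indep \<Longrightarrow> indep X \<Longrightarrow> indep Y \<Longrightarrow> card X < card Y \<Longrightarrow> \<exists>y\<in>Y-X. indep (insert y X)"
  by (rule m_props(5))

lemma bad_count:
  assumes M: "matroid E indep" and I: "indep I" and Bs: "indep Bs"
  shows "card {y\<in>Bs. y \<in> I \<or> \<not> indep (insert y I)} \<le> card I"
proof (rule ccontr)
  let ?D = "{y\<in>Bs. y \<in> I \<or> \<not> indep (insert y I)}"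
  assume "\<not> ?thesis"
  hence "card I < card ?D" by simp
  moreover have "indep ?D" by (rule m_her[OF M Bs]) auto
  ultimately obtain y where "y \<in> ?D - I" "indep (insert y I)" using m_aug[OF M I] by blast
  thus False by blast
qed

lemma aug_to:
  assumes M: "matroid E indep" and A: "indep A"
  shows "indep J \<Longrightarrow> card J \<le> k \<Longrightarrow> k \<le> card A \<Longrightarrow> k - card J = d \<Longrightarrow>
    \<exists>I. J \<subseteq> I \<and> I \<subseteq> J \<union> A \<and> indep I \<and> card I = k"
proof (induction d arbitrary: J)
  case 0
  then show ?case by (intro exI[of _ J]) auto
next
  case (Suc d)
  then have "card J < card A" by linarith
  then obtain a where a: "a \<in> A - J" "indep (insert a J)" using m_aug[OF M Suc.prems(1) A] by blast
  have fJ: "finite J" using m_fin[OF M Suc.prems(1)] .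
  have c: "card (insert a J) = Suc (card J)" using a fJ by simp
  have h1: "card (insert a J) \<le> k" using c Suc.prems(2,4) by linarith
  have h2: "k - card (insert a J) = d" using c Suc.prems(4) by linarith
  obtain I where I: "insert a J \<subseteq> I" "I \<subseteq> insert a J \<union> A" "indep I" "card I = k"
    using Suc.IH[OF a(2) h1 Suc.prems(3) h2] by blast
  have "J \<subseteq> I" "I \<subseteq> J \<union> A" using I(1,2) a(1) by auto
  then show ?case using I(3,4) by blast
qed

lemma rank_fin: assumes M: "matroid E indep" shows "finite (card ` {X. indep X})"
proof -
  have "card ` {X. indep X} \<subseteq> {..card E}"
    using m_props(1)[OF M] m_sub[OF M] by (auto intro!: card_mono)
  thus ?thesis by (rule finite_subset[OF _ finite_atMost])
qed

lemma card_le_rank: "matroid E indep \<Longrightarrow> indep X \<Longrightarrow> card X \<le> mrank E indep"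
  unfolding mrank_def by (rule Max_ge[OF rank_fin]) auto

lemma rank_att: assumes M: "matroid E indep" shows "\<exists>X. indep X \<and> card X = mrank E indep"
proof -
  have "indep {}" using m_props(3)[OF M] .
  hence "mrank E indep \<in> card ` {X. indep X}" unfolding mrank_def
    using rank_fin[OF M] by (intro Max_in) auto
  thus ?thesis by auto
qed

lemma basis_card: assumes M: "matroid E indep" and b: "basis E indep B0"
  shows "card B0 = mrank E indep"
proof -
  have iB: "indep B0" using b by (simp add: basis_def)
  obtain X where X: "indep X" "card X = mrank E indep" using rank_att[OF M] by blast
  have "\<not> card B0 < card X"
  proof
    assume "card B0 < card X"
    then obtain y where "y \<in> X - B0" "indep (insert y B0)" using m_aug[OF M iB X(1)] by blast
    moreover have "y \<in> E" using m_sub[OF M X(1)] \<open>y \<in> X - B0\<close> by blast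
    ultimately show False using b by (auto simp: basis_def)
  qed
  thus ?thesis using card_le_rank[OF M iB] X by linarith
qed

lemma full_basis: assumes M: "matroid E indep" and R: "indep R" and c: "card R = mrank E indep"
  shows "basis E indep R"
  unfolding basis_def
proof (intro conjI R ballI notI)
  fix x assume x: "x \<in> E - R" and i: "indep (insert x R)"
  have "card (insert x R) = Suc (card R)" using x m_fin[OF M R] by simp
  thus False using card_le_rank[OF M i] c by simp
qed


lemma cell_unique:
  assumes T: "valid_table indep f n B T"
    and Bdisj: "\<forall>i \<in> {1..f}. \<forall>j \<in> {1..n}. \<forall>i' \<in> {1..f}. \<forall>j' \<in> {1..n}.
                  (i, j) \<noteq> (i', j') \<longrightarrow> B i j \<inter> B i' j' = {}"
    and "a \<in> {1..f}" "c \<in> {1..n}" "a' \<in> {1..f}" "c' \<in> {1..n}" "T a c = Some z" "z \<in> B a' c'"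
  shows "a = a' \<and> c = c'"
proof -
  have "z \<in> B a c" using T assms(3-7) by (auto simp: valid_table_def)
  thus ?thesis using Bdisj assms(3-8) by blast
qed

lemma modify:
  assumes M: "matroid E indep"
    and rk: "mrank E indep = n"
    and f2n: "2 * f \<le> n"
    and Bbasis: "\<forall>i \<in> {1..f}. \<forall>j \<in> {1..n}. basis E indep (B i j)"
    and Bdisj: "\<forall>i \<in> {1..f}. \<forall>j \<in> {1..n}. \<forall>i' \<in> {1..f}. \<forall>j' \<in> {1..n}.
                  (i, j) \<noteq> (i', j') \<longrightarrow> B i j \<inter> B i' j' = {}"
    and T: "valid_table indep f n B T"
    and i: "i \<in> {1..f}" and U: "U \<subseteq> {1..n}" "card U < f"
    and j0: "j0 \<in> {1..n}" "T i j0 = None"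
    and full: "\<forall>j\<in>{1..n}-U. T i j \<noteq> None"
    and ne: "j1 \<in> {1..n}-U"
  shows "\<exists>T' j. valid_table indep f n B T' \<and> (\<forall>a\<in>{1..f}. card (row_set T' n a) = card (row_set T n a))
     \<and> (\<forall>a. a \<noteq> i \<longrightarrow> T' a = T a) \<and> j \<in> {1..n} \<and> j \<notin> U \<and> T' i j = None"
proof -
  define A where "A = row_set T n i"
  define C where "C = col_set T f j0"
  define AU where "AU = {x. \<exists>c\<in>U. T i c = Some x}"
  define B0 where "B0 = B i j0"
  have iA: "indep A" using T i by (simp add: valid_table_def A_def)
  have iC: "indep C" using T j0 by (simp add: valid_table_def C_def)
  have AUA: "AU \<subseteq> A" using U unfolding AU_def A_def row_set_def by blast
  have iAU: "indep AU" using m_her[OF M iA AUA] .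
  have fA: "finite A" using m_fin[OF M iA] .
  have fAU: "finite AU" using m_fin[OF M iAU] .
  have iB0: "indep B0" using Bbasis i j0 by (simp add: basis_def B0_def)
  have fB0: "finite B0" using m_fin[OF M iB0] .
  have cB0: "card B0 = n" using basis_card[OF M] Bbasis i j0 rk B0_def by simp
  have "C \<subseteq> (\<lambda>a. the (T a j0)) ` {1..f}" unfolding C_def col_set_def by force
  hence cC: "card C \<le> f" by (metis card_atLeastAtMost card_image_le card_mono diff_Suc_1 finite_atLeastAtMost finite_imageI order_trans)
  have "AU \<subseteq> (\<lambda>c. the (T i c)) ` U" unfolding AU_def by force
  moreover have "finite U" using U finite_subset by blast
  ultimately have "card AU \<le> card U" by (meson card_image_le card_mono finite_imageI order_trans)
  hence cAU: "card AU < f" using U by linarith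
  define D1 where "D1 = {y\<in>B0. y \<in> C \<or> \<not> indep (insert y C)}"
  define D2 where "D2 = {y\<in>B0. y \<in> AU \<or> \<not> indep (insert y AU)}"
  have cD1: "card D1 \<le> f" using bad_count[OF M iC iB0] cC D1_def by simp
  have cD2: "card D2 < f" using bad_count[OF M iAU iB0] cAU D2_def by simp
  have "B0 \<subseteq> (B0 - D1 - D2) \<union> D1 \<union> D2" by blast
  hence "card B0 \<le> card ((B0 - D1 - D2) \<union> D1 \<union> D2)" by (simp add: card_mono fB0 D1_def D2_def)
  also have "\<dots> \<le> card (B0 - D1 - D2) + card D1 + card D2" by (meson card_Un_le add_le_mono1 order_trans)
  finally have "card (B0 - D1 - D2) > 0" using cB0 cD1 cD2 f2n by linarith
  then obtain y where y: "y \<in> B0" "y \<notin> D1" "y \<notin> D2" by (metis Diff_iff card_gt_0_iff ex_in_conv)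
  have yC: "indep (insert y C)" and yAU: "y \<notin> AU" "indep (insert y AU)" using y D1_def D2_def by auto
  have yA: "y \<notin> A"
  proof
    assume "y \<in> A"
    then obtain c where c: "c \<in> {1..n}" "T i c = Some y" unfolding A_def row_set_def by blast
    then have "c = j0" using cell_unique[OF T Bdisj i c(1) i j0(1) c(2)] y(1) B0_def by blast
    thus False using c j0 by simp
  qed
  obtain z1 where z1: "T i j1 = Some z1" using full ne by blast
  have z1A: "z1 \<in> A" using z1 ne unfolding A_def row_set_def by blast
  have z1AU: "z1 \<notin> AU"
  proof
    assume "z1 \<in> AU"
    then obtain c where c: "c \<in> U" "T i c = Some z1" unfolding AU_def by blast
    have "z1 \<in> B i j1" using T i ne z1 by (auto simp: valid_table_def)
    then have "c = j1" using cell_unique[OF T Bdisj i _ i _ c(2)] c(1) U ne by blast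
    thus False using c ne by simp
  qed
  have "AU \<subset> A" using AUA z1A z1AU by blast
  hence "card AU < card A" using fA by (simp add: psubset_card_mono)
  hence cle: "card (insert y AU) \<le> card A" using yAU fAU by simp
  obtain I where I: "insert y AU \<subseteq> I" "I \<subseteq> insert y AU \<union> A" "indep I" "card I = card A"
    using aug_to[OF M iA yAU(2) cle order_refl refl] by blast
  have fI: "finite I" using m_fin[OF M I(3)] .
  have IA: "I - {y} \<subseteq> A" using I(2) AUA by blast
  have "card A > 0" using z1A fA card_gt_0_iff by blast
  hence "card (I - {y}) < card A" using I(1,4) fI by simp
  moreover have "A \<subseteq> I - {y} \<Longrightarrow> card A \<le> card (I - {y})" using fI by (simp add: card_mono)
  ultimately have "\<not> A \<subseteq> I - {y}" by linarith
  then obtain x where x: "x \<in> A" "x \<notin> I - {y}" by blast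
  have xI: "x \<notin> I" using x yA by blast
  have xAU: "x \<notin> AU" using xI I(1) by blast
  have Ieq: "I = insert y (A - {x})"
  proof (rule card_subset_eq)
    show "finite (insert y (A - {x}))" using fA by simp
    show "I \<subseteq> insert y (A - {x})" using I(2) AUA xI by blast
    show "card I = card (insert y (A - {x}))" using I(4) yA x(1) fA
      by (simp add: card_Diff_singleton) (metis One_nat_def Suc_pred card_gt_0_iff empty_iff)
  qed
  obtain j where j: "j \<in> {1..n}" "T i j = Some x" using x(1) unfolding A_def row_set_def by blast
  have jU: "j \<notin> U" using xAU j unfolding AU_def by blast
  have jj0: "j \<noteq> j0" using j j0 by auto
  have xuniq: "\<And>c. c \<in> {1..n} \<Longrightarrow> T i c = Some x \<Longrightarrow> c = j"
  proof -
    fix c assume c: "c \<in> {1..n}" "T i c = Some x"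
    have "x \<in> B i j" using T i j by (auto simp: valid_table_def)
    thus "c = j" using cell_unique[OF T Bdisj i c(1) i j(1) c(2)] by blast
  qed
  define T' where "T' = (\<lambda>a c. if a = i \<and> c = j then None else if a = i \<and> c = j0 then Some y else T a c)"
  have rowi: "row_set T' n i = I"
  proof
    show "row_set T' n i \<subseteq> I" unfolding Ieq
    proof
      fix z assume "z \<in> row_set T' n i"
      then obtain c where c: "c \<in> {1..n}" "T' i c = Some z" unfolding row_set_def by blast
      show "z \<in> insert y (A - {x})"
      proof (cases "c = j0")
        case True thus ?thesis using c jj0 by (simp add: T'_def)
      next
        case False
        then have "c \<noteq> j" "T i c = Some z" using c by (auto simp: T'_def split: if_splits)
        thus ?thesis using c xuniq unfolding A_def row_set_def by blast
      qed
    qed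
    show "I \<subseteq> row_set T' n i" unfolding Ieq
    proof
      fix z assume z: "z \<in> insert y (A - {x})"
      show "z \<in> row_set T' n i"
      proof (cases "z = y")
        case True thus ?thesis using j0 jj0 unfolding row_set_def T'_def by force
      next
        case False
        then obtain c where c: "c \<in> {1..n}" "T i c = Some z" "z \<noteq> x"
          using z unfolding A_def row_set_def by blast
        have "c \<noteq> j" using c j by auto
        moreover have "c \<noteq> j0" using c j0 by auto
        ultimately show ?thesis using c unfolding row_set_def T'_def by force
      qed
    qed
  qed
  have rowa: "\<And>a. a \<noteq> i \<Longrightarrow> T' a = T a" unfolding T'_def by auto
  have rowa': "\<And>a. a \<noteq> i \<Longrightarrow> row_set T' n a = row_set T n a" unfolding row_set_def using rowa by simp
  have colj0: "col_set T' f j0 \<subseteq> insert y C"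
    unfolding C_def col_set_def T'_def using jj0 by auto
  have colc: "\<And>c. c \<noteq> j0 \<Longrightarrow> col_set T' f c \<subseteq> col_set T f c"
    unfolding col_set_def T'_def by auto
  have valid: "valid_table indep f n B T'"
    unfolding valid_table_def
  proof (intro conjI ballI allI impI)
    fix a c x' assume a: "a \<in> {1..f}" and c: "c \<in> {1..n}" and e: "T' a c = Some x'"
    show "x' \<in> B a c"
    proof (cases "a = i \<and> c = j0")
      case True thus ?thesis using e y(1) B0_def jj0 by (auto simp: T'_def)
    next
      case False
      then have "T a c = Some x'" using e by (auto simp: T'_def split: if_splits)
      thus ?thesis using T a c by (auto simp: valid_table_def)
    qed
  next
    fix a assume a: "a \<in> {1..f}"
    show "indep (row_set T' n a)"
      using rowi I(3) rowa' T a by (cases "a = i") (auto simp: valid_table_def)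
  next
    fix c assume c: "c \<in> {1..n}"
    show "indep (col_set T' f c)"
    proof (cases "c = j0")
      case True thus ?thesis using m_her[OF M yC colj0] by simp
    next
      case False thus ?thesis using m_her[OF M _ colc[OF False]] T c by (auto simp: valid_table_def)
    qed
  qed
  show ?thesis
  proof (intro exI conjI)
    show "valid_table indep f n B T'" by (rule valid)
    show "\<forall>a\<in>{1..f}. card (row_set T' n a) = card (row_set T n a)"
    proof
      fix a assume "a \<in> {1..f}"
      show "card (row_set T' n a) = card (row_set T n a)"
        using rowi rowa' I(4) A_def by (cases "a = i") auto
    qed
    show "\<forall>a. a \<noteq> i \<longrightarrow> T' a = T a" using rowa by blast
    show "j \<in> {1..n}" "j \<notin> U" by (fact j(1)) (fact jU)
    show "T' i j = None" by (simp add: T'_def)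
  qed
qed


definition tinv where "tinv indep f n B T m T' b \<longleftrightarrow> valid_table indep f n B T' \<and>
  (\<forall>i\<in>{1..f}. card (row_set T' n i) = card (row_set T n i)) \<and> b ` {1..m} \<subseteq> {1..n} \<and> inj_on b {1..m} \<and>
  (\<forall>i\<in>{1..m}. T' i (b i) = None \<or> (\<forall>j\<in>{1..n}. T' i j \<noteq> None))"

lemma extend:
  assumes "tinv indep f n B T m T' b" "valid_table indep f n B T''"
    "\<forall>a\<in>{1..f}. card (row_set T'' n a) = card (row_set T' n a)"
    "\<forall>a. a \<noteq> Suc m \<longrightarrow> T'' a = T' a" "j \<in> {1..n}" "j \<notin> b ` {1..m}"
    "T'' (Suc m) j = None \<or> (\<forall>c\<in>{1..n}. T'' (Suc m) c \<noteq> None)"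
  shows "tinv indep f n B T (Suc m) T'' (b(Suc m := j))"
proof -
  let ?b = "b(Suc m := j)"
  have I: "valid_table indep f n B T'" "\<forall>i\<in>{1..f}. card (row_set T' n i) = card (row_set T n i)"
    "b ` {1..m} \<subseteq> {1..n}" "inj_on b {1..m}"
    "\<forall>i\<in>{1..m}. T' i (b i) = None \<or> (\<forall>j\<in>{1..n}. T' i j \<noteq> None)"
    using assms(1) unfolding tinv_def by simp_all
  have e: "{1..Suc m} = insert (Suc m) {1..m}" by auto
  have im: "?b ` {1..m} = b ` {1..m}" by auto
  have c1: "\<forall>i\<in>{1..f}. card (row_set T'' n i) = card (row_set T n i)" using I(2) assms(3) by simp
  have c2: "?b ` {1..Suc m} \<subseteq> {1..n}"
  proof (rule image_subsetI)
    fix i assume i: "i \<in> {1..Suc m}"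
    show "?b i \<in> {1..n}"
    proof (cases "i = Suc m")
      case True thus ?thesis using assms(5) by simp
    next
      case False
      hence "i \<in> {1..m}" using i by auto
      hence bi: "b i \<in> {1..n}" using I(3) by blast
      have "?b i = b i" using False by simp
      thus ?thesis using bi by (simp only:)
    qed
  qed
  have inj0: "inj_on ?b {1..m}"
  proof (rule inj_onI)
    fix x y assume x: "x \<in> {1..m}" and y: "y \<in> {1..m}" and xy: "?b x = ?b y"
    have "?b x = b x" "?b y = b y" using x y by auto
    hence "b x = b y" using xy by simp
    thus "x = y" using inj_onD[OF I(4) _ x y] by blast
  qed
  have nm: "{1..m} - {Suc m} = {1..m}" by auto
  have bj: "?b (Suc m) = j" by simp
  have "inj_on ?b (insert (Suc m) {1..m})" unfolding inj_on_insert nm im bj using inj0 assms(6) by blast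
  hence c3: "inj_on ?b {1..Suc m}" using e by simp
  have c4: "\<forall>i\<in>{1..Suc m}. T'' i (?b i) = None \<or> (\<forall>c\<in>{1..n}. T'' i c \<noteq> None)"
  proof
    fix i assume i: "i \<in> {1..Suc m}"
    show "T'' i (?b i) = None \<or> (\<forall>c\<in>{1..n}. T'' i c \<noteq> None)"
    proof (cases "i = Suc m")
      case True thus ?thesis using assms(7) by simp
    next
      case False
      hence "i \<in> {1..m}" "T'' i = T' i" using i assms(4) by auto
      thus ?thesis using I(5) False by simp
    qed
  qed
  show ?thesis unfolding tinv_def using assms(2) c1 c2 c3 c4 by blast
qed

lemma step:
  assumes M: "matroid E indep"
    and rk: "mrank E indep = n"
    and fn: "f \<le> n" and f2n: "2 * f \<le> n"
    and Bbasis: "\<forall>i \<in> {1..f}. \<forall>j \<in> {1..n}. basis E indep (B i j)"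
    and Bdisj: "\<forall>i \<in> {1..f}. \<forall>j \<in> {1..n}. \<forall>i' \<in> {1..f}. \<forall>j' \<in> {1..n}.
                  (i, j) \<noteq> (i', j') \<longrightarrow> B i j \<inter> B i' j' = {}"
    and m: "m < f" and I: "tinv indep f n B T m T' b"
  shows "\<exists>T'' b'. tinv indep f n B T (Suc m) T'' b'"
proof -
  define U where "U = b ` {1..m}"
  have U: "U \<subseteq> {1..n}" using I by (simp add: tinv_def U_def)
  have cU: "card U < f" using m card_image_le[of "{1..m}" b] unfolding U_def by simp
  have "\<not> {1..n} \<subseteq> U" using card_mono[of U "{1..n}"] cU fn U_def by fastforce
  then obtain j1 where j1: "j1 \<in> {1..n} - U" by blast
  have i: "Suc m \<in> {1..f}" using m by simp
  have vT: "valid_table indep f n B T'" using I by (simp add: tinv_def)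
  show ?thesis
  proof (cases "\<exists>j\<in>{1..n}-U. T' (Suc m) j = None")
    case True
    then obtain j where "j\<in>{1..n}-U" "T' (Suc m) j = None" by blast
    thus ?thesis using extend[OF I vT] U_def by blast
  next
    case F1: False
    show ?thesis
    proof (cases "\<forall>c\<in>{1..n}. T' (Suc m) c \<noteq> None")
      case True
      thus ?thesis using extend[OF I vT, of j1] j1 U_def by blast
    next
      case False
      then obtain j0 where j0: "j0 \<in> {1..n}" "T' (Suc m) j0 = None" by blast
      have fl: "\<forall>j\<in>{1..n}-U. T' (Suc m) j \<noteq> None" using F1 by auto
      obtain T'' j where "valid_table indep f n B T''"
        "\<forall>a\<in>{1..f}. card (row_set T'' n a) = card (row_set T' n a)"
        "\<forall>a. a \<noteq> Suc m \<longrightarrow> T'' a = T' a" "j \<in> {1..n}" "j \<notin> U" "T'' (Suc m) j = None"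
        using modify[OF M rk f2n Bbasis Bdisj vT i U cU j0 fl j1] by blast
      thus ?thesis using extend[OF I, of T'' j] U_def by blast
    qed
  qed
qed

lemma all_inv:
  assumes M: "matroid E indep"
    and rk: "mrank E indep = n"
    and fn: "f \<le> n" and f2n: "2 * f \<le> n"
    and Bbasis: "\<forall>i \<in> {1..f}. \<forall>j \<in> {1..n}. basis E indep (B i j)"
    and Bdisj: "\<forall>i \<in> {1..f}. \<forall>j \<in> {1..n}. \<forall>i' \<in> {1..f}. \<forall>j' \<in> {1..n}.
                  (i, j) \<noteq> (i', j') \<longrightarrow> B i j \<inter> B i' j' = {}"
    and T: "valid_table indep f n B T"
  shows "m \<le> f \<Longrightarrow> \<exists>T' b. tinv indep f n B T m T' b"
proof (induction m)
  case 0
  show ?case using T unfolding tinv_def by (intro exI[of _ T] exI[of _ id]) auto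
next
  case (Suc m)
  then obtain T' b where I: "tinv indep f n B T m T' b" by auto
  have "m < f" using Suc.prems by simp
  thus ?case using step[OF M rk fn f2n Bbasis Bdisj _ I] by blast
qed

lemma full_row_basis:
  assumes M: "matroid E indep" and rk: "mrank E indep = n"
    and Bdisj: "\<forall>i \<in> {1..f}. \<forall>j \<in> {1..n}. \<forall>i' \<in> {1..f}. \<forall>j' \<in> {1..n}.
                  (i, j) \<noteq> (i', j') \<longrightarrow> B i j \<inter> B i' j' = {}"
    and T: "valid_table indep f n B T" and i: "i \<in> {1..f}"
    and full: "\<forall>j\<in>{1..n}. T i j \<noteq> None"
  shows "basis E indep (row_set T n i)"
proof (rule full_basis[OF M])
  show iR: "indep (row_set T n i)" using T i by (simp add: valid_table_def)
  have eq: "row_set T n i = (\<lambda>j. the (T i j)) ` {1..n}"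
    unfolding row_set_def using full by force
  have "inj_on (\<lambda>j. the (T i j)) {1..n}"
  proof (rule inj_onI)
    fix j j' assume j: "j \<in> {1..n}" "j' \<in> {1..n}" "the (T i j) = the (T i j')"
    obtain z where z: "T i j = Some z" using full j by blast
    obtain z' where z': "T i j' = Some z'" using full j by blast
    have zz: "z = z'" using j(3) z z' by simp
    have "z \<in> B i j'" using T i j z' zz by (auto simp: valid_table_def)
    thus "j = j'" using cell_unique[OF T Bdisj i j(1) i j(2) z] by blast
  qed
  thus "card (row_set T n i) = mrank E indep" using eq rk by (simp add: card_image)
qed

theorem mainTheorem7:
  fixes E :: "'a set" and indep :: "'a set \<Rightarrow> bool" and f n :: nat
    and B :: "nat \<Rightarrow> nat \<Rightarrow> 'a set" and T :: "nat \<Rightarrow> nat \<Rightarrow> 'a option"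
  assumes M: "matroid E indep"
    and rk: "mrank E indep = n"
    and fpos: "0 < f" and fn: "f \<le> n" and f2n: "2 * f \<le> n"
    and Bbasis: "\<forall>i \<in> {1..f}. \<forall>j \<in> {1..n}. basis E indep (B i j)"
    and Bdisj: "\<forall>i \<in> {1..f}. \<forall>j \<in> {1..n}. \<forall>i' \<in> {1..f}. \<forall>j' \<in> {1..n}.
                  (i, j) \<noteq> (i', j') \<longrightarrow> B i j \<inter> B i' j' = {}"
    and T: "valid_table indep f n B T"
  shows "\<exists>T' (b :: nat \<Rightarrow> nat).
           valid_table indep f n B T' \<and>
           (\<forall>i \<in> {1..f}. card (row_set T' n i) = card (row_set T n i)) \<and>
           b ` {1..f} \<subseteq> {1..n} \<and> inj_on b {1..f} \<and>
           (\<forall>i \<in> {1..f}. \<not> basis E indep (row_set T' n i) \<longrightarrow> T' i (b i) = None)"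
proof -
  obtain T' b where I: "tinv indep f n B T f T' b"
    using all_inv[OF M rk fn f2n Bbasis Bdisj T order_refl] by blast
  have vT: "valid_table indep f n B T'" using I by (simp add: tinv_def)
  have last: "\<forall>i \<in> {1..f}. \<not> basis E indep (row_set T' n i) \<longrightarrow> T' i (b i) = None"
  proof (intro ballI impI)
    fix i assume i: "i \<in> {1..f}" and nb: "\<not> basis E indep (row_set T' n i)"
    have "T' i (b i) = None \<or> (\<forall>j\<in>{1..n}. T' i j \<noteq> None)" using I i by (simp add: tinv_def)
    thus "T' i (b i) = None" using full_row_basis[OF M rk Bdisj vT i] nb by blast
  qed
  have I2: "valid_table indep f n B T' \<and>
           (\<forall>i \<in> {1..f}. card (row_set T' n i) = card (row_set T n i)) \<and>
           b ` {1..f} \<subseteq> {1..n} \<and> inj_on b {1..f}" using I unfolding tinv_def by simp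
  show ?thesis
    apply (rule exI[of _ T'], rule exI[of _ b])
    using I2 last by (intro conjI) simp_all
qed

end
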